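(* Suppose $F$ is symmetric ($F(-i)=1-F(i)$ for all $i$). Fix $R\in(0,1)$, let $\beta=F(1/2-R)$, fix $\sigma>0$, and regard the value $V$ of the recommendation system as a function of $Q\in(0,1/2)$, where $q_H=\frac{(1-2Q)\sigma}{1+\sigma}$, $q_L=\frac{1-2Q}{1+\sigma}$ and $q_1+q_2=2Q$ (with $q_1,q_2>0$). Then: (i) if $3\sigma-\beta-\sigma^2+\sigma^2\beta>0$, the value is decreasing in $Q$; in particular this is the case when $\sigma=1$; (ii) if $3\sigma-\beta-\sigma^2+\sigma^2\beta<0$, then $Q^*=\frac{3\sigma-\beta-\sigma^2+\sigma^2\beta}{4\sigma-4\beta-4\sigma^2+4\sigma^2\beta}$ lies in $(0,1/2)$ and maximizes the value over $Q\in(0,1/2)$.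
   Context: Setting. Consumer types are $i\in[-1/2,1/2]$, distributed according to a continuous cumulative distribution function $F$ with full support on $[-1/2,1/2]$. A product has a quality vector $(Q_1,Q_2)\in\{0,1\}^2$; a type-$i$ consumer gets payoff $(1/2+i)Q_1+(1/2-i)Q_2$ from it. The versions $(1,1),(1,0),(0,1),(0,0)$ have prior probabilities $q_H,q_1,q_2,q_L$, all strictly positive and summing to $1$. Given a threshold $R\in(0,1)$, a sender with type drawn from $F$ independently of the product gives a buy recommendation $B$ if her payoff is at least $R$ and a don't-buy recommendation $D$ otherwise. Let $\phi_1(R)=1-F(R-1/2)$, $\phi_2(R)=F(1/2-R)$, $\pi^B=q_H+q_1\phi_1(R)+q_2\phi_2(R)$, $\pi^D=1-\pi^B$. Posteriors: $p^B_H=q_H/\pi^B$, $p^B_1=q_1\phi_1(R)/\pi^B$, $p^B_2=q_2\phi_2(R)/\pi^B$; $p^D_H=0$, $p^D_1=q_1(1-\phi_1(R))/\pi^D$, $p^D_2=q_2(1-\phi_2(R))/\pi^D$. Let $U_i^r=p_H^r+(1/2+i)p_1^r+(1/2-i)p_2^r$ for $r\in\{B,D\}$ and $U_i^0=q_H+(1/2+i)q_1+(1/2-i)q_2$. The value of the recommendation system is $V=\pi^B\int_{-1/2}^{1/2}\max\{U_i^B-U_i^0,0\}\,dF(i)+\pi^D\int_{-1/2}^{1/2}\max\{U_i^D-U_i^0,0\}\,dF(i)$. Under symmetry this depends on the primitives only through $Q=(q_1+q_2)/2$, $\sigma=q_H/q_L$ and $\beta$. *)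

theory Defs
  imports "HOL-Analysis.Analysis"
begin

text \<open>Integration against dF over [-1/2,1/2]: Lebesgue-Stieltjes integral w.r.t.
  the measure interval_measure F induced by the CDF F.\<close>

definition intF :: "(real \<Rightarrow> real) \<Rightarrow> (real \<Rightarrow> real) \<Rightarrow> real" where
  "intF F g = (LINT i:{-1/2..1/2::real}|interval_measure F. g i)"

definition phi1 :: "(real \<Rightarrow> real) \<Rightarrow> real \<Rightarrow> real" where
  "phi1 F R = 1 - F (R - 1/2)"

definition phi2 :: "(real \<Rightarrow> real) \<Rightarrow> real \<Rightarrow> real" where
  "phi2 F R = F (1/2 - R)"

definition piB :: "(real \<Rightarrow> real) \<Rightarrow> real \<Rightarrow> real \<Rightarrow> real \<Rightarrow> real \<Rightarrow> real" where
  "piB F R qH q1 q2 = qH + q1 * phi1 F R + q2 * phi2 F R"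

definition piD :: "(real \<Rightarrow> real) \<Rightarrow> real \<Rightarrow> real \<Rightarrow> real \<Rightarrow> real \<Rightarrow> real" where
  "piD F R qH q1 q2 = 1 - piB F R qH q1 q2"

text \<open>Expected payoffs of type i after recommendation B, after D, and without recommendation.\<close>

definition UB :: "(real \<Rightarrow> real) \<Rightarrow> real \<Rightarrow> real \<Rightarrow> real \<Rightarrow> real \<Rightarrow> real \<Rightarrow> real" where
  "UB F R qH q1 q2 i =
     (let pB = piB F R qH q1 q2;
          pH = qH / pB; p1 = q1 * phi1 F R / pB; p2 = q2 * phi2 F R / pB
      in pH + (1/2 + i) * p1 + (1/2 - i) * p2)"

definition UD :: "(real \<Rightarrow> real) \<Rightarrow> real \<Rightarrow> real \<Rightarrow> real \<Rightarrow> real \<Rightarrow> real \<Rightarrow> real" where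
  "UD F R qH q1 q2 i =
     (let pD = piD F R qH q1 q2;
          pH = 0; p1 = q1 * (1 - phi1 F R) / pD; p2 = q2 * (1 - phi2 F R) / pD
      in pH + (1/2 + i) * p1 + (1/2 - i) * p2)"

definition U0 :: "real \<Rightarrow> real \<Rightarrow> real \<Rightarrow> real \<Rightarrow> real" where
  "U0 qH q1 q2 i = qH + (1/2 + i) * q1 + (1/2 - i) * q2"

definition rec_value :: "(real \<Rightarrow> real) \<Rightarrow> real \<Rightarrow> real \<Rightarrow> real \<Rightarrow> real \<Rightarrow> real" where
  "rec_value F R qH q1 q2 =
     piB F R qH q1 q2 * intF F (\<lambda>i. max (UB F R qH q1 q2 i - U0 qH q1 q2 i) 0)
   + piD F R qH q1 q2 * intF F (\<lambda>i. max (UD F R qH q1 q2 i - U0 qH q1 q2 i) 0)"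

definition type_cdf :: "(real \<Rightarrow> real) \<Rightarrow> bool" where
  "type_cdf F \<longleftrightarrow> mono F \<and> continuous_on UNIV F \<and>
     (\<forall>x\<le>-1/2. F x = 0) \<and> (\<forall>x\<ge>1/2. F x = 1) \<and> strict_mono_on {-1/2..1/2} F"

definition admissible :: "real \<Rightarrow> real \<Rightarrow> real \<Rightarrow> real \<Rightarrow> real \<Rightarrow> bool" where
  "admissible \<sigma> Q qH q1 q2 \<longleftrightarrow> 0 < Q \<and> Q < 1/2 \<and>
     qH = (1 - 2*Q) * \<sigma> / (1 + \<sigma>) \<and> q1 > 0 \<and> q2 > 0 \<and> q1 + q2 = 2*Q"

end

theory Submission
  imports Defs "HOL-Probability.Distribution_Functions"
begin

lemma cdf_basic:
  assumes cdf: "type_cdf F"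
  shows "\<And>x y. x \<le> y \<Longrightarrow> F x \<le> F y"
    and "\<And>a. continuous (at_right a) F"
    and "(F \<longlongrightarrow> 0) at_bot"
    and "(F \<longlongrightarrow> 1) at_top"
    and "continuous_on UNIV F"
proof -
  show m: "\<And>x y. x \<le> y \<Longrightarrow> F x \<le> F y" using cdf by (auto simp: type_cdf_def mono_def)
  show c: "continuous_on UNIV F" using cdf by (auto simp: type_cdf_def)
  show "\<And>a. continuous (at_right a) F"
    using c by (meson UNIV_I continuous_on_eq_continuous_within continuous_within_subset subset_UNIV)
  show "(F \<longlongrightarrow> 0) at_bot"
    apply (rule tendsto_eventually)
    using cdf unfolding type_cdf_def eventually_at_bot_linorder by (intro exI[of _ "-1/2"]) auto
  show "(F \<longlongrightarrow> 1) at_top"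
    apply (rule tendsto_eventually)
    using cdf unfolding type_cdf_def eventually_at_top_linorder by (intro exI[of _ "1/2"]) auto
qed

lemma meas_facts:
  assumes cdf: "type_cdf F" and sym: "\<forall>i. F (-i) = 1 - F i"
  shows "prob_space (interval_measure F)"
    and "measure (interval_measure F) {-1/2..1/2} = 1"
    and "distr (interval_measure F) borel uminus = interval_measure F"
proof -
  note b = cdf_basic[OF cdf]
  let ?M = "interval_measure F"
  have rd: "real_distribution ?M"
    by (rule real_distribution_interval_measure) (use b in auto)
  then interpret prob_space ?M by (simp add: real_distribution_def)
  show "prob_space ?M" by unfold_locales
  have "emeasure ?M {-1/2..1/2} = F (1/2) - F (-1/2)"
    by (rule emeasure_interval_measure_Icc) (use b in auto)
  also have "F (1/2) - F (-1/2) = 1" using cdf by (auto simp: type_cdf_def)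
  finally show "measure ?M {-1/2..1/2} = 1" by (simp add: measure_def)
  have Iic: "measure ?M {..x} = F x" for x
    by (rule measure_interval_measure_Iic) (use b in auto)
  have pt: "measure ?M {x} = 0" for x
  proof -
    have "emeasure ?M {x..x} = F x - F x"
      by (rule emeasure_interval_measure_Icc) (use b in auto)
    then show ?thesis by (simp add: measure_def)
  qed
  have Iio: "measure ?M {..<x} = F x" for x
  proof -
    have "{..<x} = {..x} - {x}" by auto
    then have "measure ?M {..<x} = measure ?M {..x} - measure ?M {x}"
      by (simp add: finite_measure_Diff)
    then show ?thesis using Iic pt by simp
  qed
  have Ioi: "measure ?M {x<..} = 1 - F x" for x
  proof -
    have "{x<..} = space ?M - {..x}" by auto
    then show ?thesis using prob_compl[of "{..x}"] Iic by simp
  qed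
  show "distr ?M borel uminus = ?M"
  proof (rule measure_eqI_lessThan[symmetric])
    show "sets ?M = sets borel" by simp
    show "sets (distr ?M borel uminus) = sets borel" by simp
    show "emeasure ?M {x<..} < \<infinity>" for x by (simp add: emeasure_eq_measure)
    fix x :: real
    have "emeasure (distr ?M borel uminus) {x<..} = emeasure ?M (uminus -` {x<..} \<inter> space ?M)"
      by (rule emeasure_distr) auto
    also have "uminus -` {x<..} \<inter> space ?M = {..<-x}" by auto
    finally have "emeasure (distr ?M borel uminus) {x<..} = ennreal (F (-x))"
      by (simp add: emeasure_eq_measure Iio)
    then show "emeasure ?M {x<..} = emeasure (distr ?M borel uminus) {x<..}"
      by (simp add: emeasure_eq_measure Ioi sym)
  qed
qed


lemma intF_affine:
  assumes cdf: "type_cdf F" and sym: "\<forall>i. F (-i) = 1 - F i"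
  shows "intF F (\<lambda>i. c0 + c1 * i) = c0"
proof -
  let ?M = "interval_measure F"
  let ?S = "{-1/2..1/2::real}"
  note mf = meas_facts[OF cdf sym]
  interpret prob_space ?M by (rule mf(1))
  have int1: "integrable ?M (\<lambda>x. indicator ?S x :: real)"
    by (rule integrable_real_indicator) (auto simp: emeasure_eq_measure)
  have int2: "integrable ?M (\<lambda>x. indicator ?S x * x :: real)"
    by (rule integrable_const_bound[where B=1]) (auto simp: indicator_def)
  have I0: "integral\<^sup>L ?M (\<lambda>x. indicator ?S x * x) = 0"
  proof -
    let ?g = "\<lambda>x::real. indicator ?S x * x"
    have "integral\<^sup>L ?M ?g = integral\<^sup>L (distr ?M borel uminus) ?g"
      using mf(3) by simp
    also have "\<dots> = integral\<^sup>L ?M (\<lambda>x. ?g (- x))"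
      by (rule integral_distr) auto
    also have "(\<lambda>x. ?g (- x)) = (\<lambda>x. - ?g x)"
      by (auto simp: indicator_def fun_eq_iff)
    also have "integral\<^sup>L ?M (\<lambda>x. - ?g x) = - integral\<^sup>L ?M ?g"
      by (rule integral_minus)
    finally show ?thesis by simp
  qed
  have "intF F (\<lambda>i. c0 + c1 * i) = integral\<^sup>L ?M (\<lambda>x. c0 * indicator ?S x + c1 * (indicator ?S x * x))"
    unfolding intF_def set_lebesgue_integral_def
    by (rule Bochner_Integration.integral_cong) (auto simp: algebra_simps)
  also have "\<dots> = c0 * integral\<^sup>L ?M (\<lambda>x. indicator ?S x) + c1 * integral\<^sup>L ?M (\<lambda>x. indicator ?S x * x)"
    using int1 int2 by simp
  also have "\<dots> = c0" using I0 mf(2) by simp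
  finally show ?thesis .
qed

lemma intF_zero: "intF F (\<lambda>i. 0) = 0"
  by (simp add: intF_def)


lemma pointwise:
  assumes p1: "phi1 F R = b" and p2: "phi2 F R = b"
    and b: "0 < b" "b < 1" and q: "qH > 0" "q1 > 0" "q2 > 0" "qH + q1 + q2 < 1"
    and i: "-1/2 \<le> i" "i \<le> 1/2"
  shows "max (UB F R qH q1 q2 i - U0 qH q1 q2 i) 0
           = (qH * (1 - (qH + (q1+q2)*b)) + (q1+q2)/2 * (b - (qH + (q1+q2)*b))) / (qH + (q1+q2)*b)
             + ((q1 - q2) * (b - (qH + (q1+q2)*b)) / (qH + (q1+q2)*b)) * i"
    and "max (UD F R qH q1 q2 i - U0 qH q1 q2 i) 0 = 0"
proof -
  define P where "P = qH + (q1+q2)*b"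
  define w where "w = (1/2+i)*q1 + (1/2-i)*q2"
  define Q where "Q = (q1+q2)/2"
  have PB: "piB F R qH q1 q2 = P" by (simp add: piB_def p1 p2 P_def algebra_simps)
  have PD: "piD F R qH q1 q2 = 1 - P" by (simp add: piD_def PB)
  have P0: "P > 0" using b q by (simp add: P_def add_pos_nonneg)
  have P1: "P < 1"
  proof -
    have "(q1+q2)*b < q1 + q2" using b q by simp
    then show ?thesis using q unfolding P_def by linarith
  qed
  have ia: "1/2+i \<ge> 0" "1/2-i \<ge> 0" using i by auto
  have w0: "0 \<le> w" using mult_nonneg_nonneg[OF ia(1) less_imp_le[OF q(2)]] mult_nonneg_nonneg[OF ia(2) less_imp_le[OF q(3)]]
    unfolding w_def by linarith
  have "(1/2+i)*q1 \<le> q1" "(1/2-i)*q2 \<le> q2" using ia q i by (auto intro!: mult_left_le_one_le)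
  then have w1: "w \<le> 2*Q" unfolding w_def Q_def by simp
  have key: "2*Q*(qH*(1-P) + w*(b-P)) = (2*Q - w)*qH*(1-P) + w*(1-qH-2*Q)*P"
    unfolding P_def Q_def by algebra
  have Q0: "Q > 0" using q by (simp add: Q_def)
  have nn: "qH*(1-P) + w*(b-P) \<ge> 0"
  proof -
    have "(2*Q - w)*qH*(1-P) + w*(1-qH-2*Q)*P \<ge> 0"
      using w0 w1 q P0 P1 by (intro add_nonneg_nonneg mult_nonneg_nonneg) (auto simp: Q_def)
    then have "2*Q*(qH*(1-P) + w*(b-P)) \<ge> 0" using key by simp
    then show ?thesis using Q0 by (simp add: zero_le_mult_iff)
  qed
  have UB: "UB F R qH q1 q2 i - U0 qH q1 q2 i = (qH*(1-P) + w*(b-P)) / P"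
    unfolding UB_def U0_def Let_def PB p1 p2 w_def using P0
    by (simp add: field_simps)
  have UD: "UD F R qH q1 q2 i - U0 qH q1 q2 i = - (qH*(1-P) + w*(b-P)) / (1 - P)"
    unfolding UD_def U0_def Let_def PD p1 p2 w_def using P1
    by (simp add: divide_simps) (simp add: algebra_simps)
  have "(qH*(1-P) + w*(b-P)) / P = (qH * (1 - P) + (q1+q2)/2 * (b - P)) / P + ((q1 - q2) * (b - P) / P) * i"
    using P0 unfolding w_def by (simp add: field_simps)
  then show "max (UB F R qH q1 q2 i - U0 qH q1 q2 i) 0
           = (qH * (1 - (qH + (q1+q2)*b)) + (q1+q2)/2 * (b - (qH + (q1+q2)*b))) / (qH + (q1+q2)*b)
             + ((q1 - q2) * (b - (qH + (q1+q2)*b)) / (qH + (q1+q2)*b)) * i"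
  proof -
    have "(qH*(1-P) + w*(b-P)) / P \<ge> 0" using nn P0 by simp
    then show ?thesis using UB \<open>(qH*(1-P) + w*(b-P)) / P = _\<close> unfolding P_def[symmetric]
      by (simp only: max_def) simp
  qed
  show "max (UD F R qH q1 q2 i - U0 qH q1 q2 i) 0 = 0"
    using UD nn P1 by (simp add: divide_nonpos_pos)
qed


lemma intF_cong:
  assumes "\<And>i. -1/2 \<le> i \<Longrightarrow> i \<le> 1/2 \<Longrightarrow> g i = h i"
  shows "intF F g = intF F h"
  unfolding intF_def
  by (rule set_lebesgue_integral_cong) (use assms in auto)

lemma value_formula:
  assumes cdf: "type_cdf F" and sym: "\<forall>i. F (-i) = 1 - F i"
    and R: "0 < R" "R < 1" and beta: "\<beta> = F (1/2 - R)" and sigma: "\<sigma> > 0"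
    and adm: "admissible \<sigma> Q qH q1 q2"
  shows "rec_value F R qH q1 q2 = (\<sigma> - (3*\<sigma> - \<beta> - \<sigma>^2 + \<sigma>^2*\<beta>) * Q
            + 2 * ((1-\<sigma>)*(\<sigma> - \<beta>*(1+\<sigma>))) * Q^2) / (1+\<sigma>)^2"
proof -
  have smo: "strict_mono_on {-1/2..1/2} F" using cdf by (simp add: type_cdf_def)
  have "F (-1/2) < F (1/2 - R)" by (rule strict_mono_onD[OF smo]) (use R in auto)
  moreover have "F (1/2 - R) < F (1/2)" by (rule strict_mono_onD[OF smo]) (use R in auto)
  moreover have "F (-1/2) = 0" "F (1/2) = 1" using cdf by (auto simp: type_cdf_def)
  ultimately have b: "0 < \<beta>" "\<beta> < 1" using beta by auto
  have p2: "phi2 F R = \<beta>" by (simp add: phi2_def beta)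
  have p1: "phi1 F R = \<beta>"
    using sym[rule_format, of "R - 1/2"] by (simp add: phi1_def beta)
  from adm have Q: "0 < Q" "Q < 1/2" and qH: "qH = (1 - 2*Q) * \<sigma> / (1 + \<sigma>)"
    and q: "q1 > 0" "q2 > 0" "q1 + q2 = 2*Q" by (auto simp: admissible_def)
  have qH0: "qH > 0" using Q sigma qH by simp
  have "qH < 1 - 2*Q"
  proof -
    have "(1 - 2*Q) * \<sigma> < (1 - 2*Q) * (1 + \<sigma>)" using Q by simp
    then show ?thesis using qH sigma by (simp add: divide_less_eq)
  qed
  then have qs: "qH + q1 + q2 < 1" using q by simp
  define P where "P = qH + (q1+q2)*\<beta>"
  have PB: "piB F R qH q1 q2 = P" by (simp add: piB_def p1 p2 P_def algebra_simps)
  have PD: "piD F R qH q1 q2 = 1 - P" by (simp add: piD_def PB)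
  have P0: "P > 0" using b q qH0 by (simp add: P_def add_pos_nonneg)
  note pw = pointwise[OF p1 p2 b qH0 q(1,2) qs]
  have "rec_value F R qH q1 q2 = P * intF F (\<lambda>i. (qH * (1 - P) + (q1+q2)/2 * (\<beta> - P)) / P
             + ((q1 - q2) * (\<beta> - P) / P) * i) + (1 - P) * intF F (\<lambda>i. 0)"
    unfolding rec_value_def PB PD
    by (intro arg_cong2[where f="(+)"] arg_cong2[where f="(*)"] refl intF_cong)
       (use pw in \<open>auto simp: P_def\<close>)
  also have "\<dots> = qH * (1 - P) + (q1+q2)/2 * (\<beta> - P)"
    using P0 by (simp only: intF_affine[OF cdf sym] intF_zero) simp
  also have "\<dots> = (\<sigma> - (3*\<sigma> - \<beta> - \<sigma>^2 + \<sigma>^2*\<beta>) * Q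
            + 2 * ((1-\<sigma>)*(\<sigma> - \<beta>*(1+\<sigma>))) * Q^2) / (1+\<sigma>)^2"
  proof -
    have qHe: "qH * (1+\<sigma>) = (1 - 2*Q) * \<sigma>" using qH sigma by (simp add: field_simps)
    have ne: "(1+\<sigma>)^2 \<noteq> 0" using sigma by simp
    have "(qH * (1 - P) + (q1+q2)/2 * (\<beta> - P)) * (1+\<sigma>)^2 = (\<sigma> - (3*\<sigma> - \<beta> - \<sigma>^2 + \<sigma>^2*\<beta>) * Q
            + 2 * ((1-\<sigma>)*(\<sigma> - \<beta>*(1+\<sigma>))) * Q^2)"
      unfolding P_def q(3) using qHe by algebra
    then show ?thesis using ne by (simp add: eq_divide_eq)
  qed
  finally show ?thesis .
qed


lemma beta_bounds:
  assumes cdf: "type_cdf F" and R: "0 < R" "R < 1" and beta: "\<beta> = F (1/2 - R)"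
  shows "0 < \<beta>" "\<beta> < 1"
proof -
  have smo: "strict_mono_on {-1/2..1/2} F" using cdf by (simp add: type_cdf_def)
  have "F (-1/2) < F (1/2 - R)" by (rule strict_mono_onD[OF smo]) (use R in auto)
  moreover have "F (1/2 - R) < F (1/2)" by (rule strict_mono_onD[OF smo]) (use R in auto)
  moreover have "F (-1/2) = 0" "F (1/2) = 1" using cdf by (auto simp: type_cdf_def)
  ultimately show "0 < \<beta>" "\<beta> < 1" using beta by auto
qed

lemma VF_lemma:
  fixes F :: "real \<Rightarrow> real" and R \<sigma> \<beta> K D :: real
  assumes cdf: "type_cdf F"
    and sym: "\<forall>i. F (-i) = 1 - F i"
    and R: "0 < R" "R < 1"
    and beta: "\<beta> = F (1/2 - R)"
    and sigma: "\<sigma> > 0"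
    and K_def: "K = 3*\<sigma> - \<beta> - \<sigma>^2 + \<sigma>^2*\<beta>"
    and D_def: "D = (1-\<sigma>)*(\<sigma> - \<beta>*(1+\<sigma>))"
    and a: "admissible \<sigma> Q qH q1 q2"
  shows "rec_value F R qH q1 q2 = (\<sigma> - K * Q + 2 * D * Q^2) / (1+\<sigma>)^2"
  unfolding K_def D_def by (rule value_formula[OF cdf sym R beta sigma a])

lemma KD_lemma:
  fixes F :: "real \<Rightarrow> real" and R \<sigma> \<beta> K D :: real
  assumes cdf: "type_cdf F"
    and sym: "\<forall>i. F (-i) = 1 - F i"
    and R: "0 < R" "R < 1"
    and beta: "\<beta> = F (1/2 - R)"
    and sigma: "\<sigma> > 0"
    and K_def: "K = 3*\<sigma> - \<beta> - \<sigma>^2 + \<sigma>^2*\<beta>"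
    and D_def: "D = (1-\<sigma>)*(\<sigma> - \<beta>*(1+\<sigma>))"
  shows "-K + 2*D < 0"
proof -
  note b = beta_bounds[OF cdf R beta]
  have "-K + 2*D = -\<sigma> - \<sigma>^2*(1-\<beta>) - \<beta>" unfolding K_def D_def by (simp add: algebra_simps power2_eq_square)
  also have "\<dots> < 0"
  proof -
    have "\<sigma>^2*(1-\<beta>) \<ge> 0" using b by simp
    then show ?thesis using b sigma by linarith
  qed
  finally show ?thesis .
qed

lemma part1_lemma:
  fixes F :: "real \<Rightarrow> real" and R \<sigma> \<beta> K D :: real
  assumes cdf: "type_cdf F"
    and sym: "\<forall>i. F (-i) = 1 - F i"
    and R: "0 < R" "R < 1"
    and beta: "\<beta> = F (1/2 - R)"
    and sigma: "\<sigma> > 0"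
    and K_def: "K = 3*\<sigma> - \<beta> - \<sigma>^2 + \<sigma>^2*\<beta>"
    and D_def: "D = (1-\<sigma>)*(\<sigma> - \<beta>*(1+\<sigma>))"
    and K: "K > 0"
    and a1: "admissible \<sigma> Q qH q1 q2" and a2: "admissible \<sigma> Q' qH' q1' q2'" and lt: "Q < Q'"
  shows "rec_value F R qH' q1' q2' < rec_value F R qH q1 q2"
proof -
  note VF = VF_lemma[OF cdf sym R beta sigma K_def D_def]
  note KD = KD_lemma[OF cdf sym R beta sigma K_def D_def]
  have sp: "(1+\<sigma>)^2 > 0" using sigma by simp
  have Qb: "0 < Q" "Q' < 1/2" using a1 a2 by (auto simp: admissible_def)
  define t where "t = Q + Q'"
  have t: "0 < t" "t < 1" using Qb lt by (auto simp: t_def)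
  have e1: "-K + 2*D*t = (1-t)*(-K) + t*(-K + 2*D)" by (simp add: algebra_simps)
  have e2: "(1-t)*(-K) < 0" using t K by (simp add: mult_pos_neg)
  have e3: "t*(-K + 2*D) < 0" using t KD by (simp add: mult_pos_neg)
  have neg: "-K + 2*D*t < 0" using e1 e2 e3 by linarith
  have "(\<sigma> - K * Q' + 2 * D * Q'^2) - (\<sigma> - K * Q + 2 * D * Q^2) = (Q' - Q) * (-K + 2*D*t)"
    unfolding t_def by (simp add: algebra_simps power2_eq_square)
  also have "\<dots> < 0" using lt neg by (simp add: mult_pos_neg)
  finally have "(\<sigma> - K * Q' + 2 * D * Q'^2) / (1+\<sigma>)^2 < (\<sigma> - K * Q + 2 * D * Q^2) / (1+\<sigma>)^2"
    using sp by (simp add: divide_strict_right_mono)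
  then show ?thesis using VF[OF a1] VF[OF a2] by simp
qed

lemma part3_lemma:
  fixes F :: "real \<Rightarrow> real" and R \<sigma> \<beta> K D :: real
  assumes cdf: "type_cdf F"
    and sym: "\<forall>i. F (-i) = 1 - F i"
    and R: "0 < R" "R < 1"
    and beta: "\<beta> = F (1/2 - R)"
    and sigma: "\<sigma> > 0"
    and K_def: "K = 3*\<sigma> - \<beta> - \<sigma>^2 + \<sigma>^2*\<beta>"
    and D_def: "D = (1-\<sigma>)*(\<sigma> - \<beta>*(1+\<sigma>))"
    and K: "K < 0"
  shows "0 < K / (4*D)" "K / (4*D) < 1/2"
    and "admissible \<sigma> (K / (4*D)) qH q1 q2 \<Longrightarrow> admissible \<sigma> Q qH' q1' q2'
               \<Longrightarrow> rec_value F R qH' q1' q2' \<le> rec_value F R qH q1 q2"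
proof -
  note VF = VF_lemma[OF cdf sym R beta sigma K_def D_def]
  note KD = KD_lemma[OF cdf sym R beta sigma K_def D_def]
  have sp: "(1+\<sigma>)^2 > 0" using sigma by simp
  have Dn: "D < 0" using K KD by linarith
  define Qs where "Qs = K / (4*D)"
  show "0 < K / (4*D)" using K Dn by (simp add: divide_neg_neg)
  show "K / (4*D) < 1/2" using K Dn KD by (simp add: divide_less_eq)
  have KQ: "K = 4*D*Qs" unfolding Qs_def using Dn by simp
  assume a1: "admissible \<sigma> (K / (4*D)) qH q1 q2" and a2: "admissible \<sigma> Q qH' q1' q2'"
  have "(\<sigma> - K * Qs + 2 * D * Qs^2) - (\<sigma> - K * Q + 2 * D * Q^2) = - 2 * D * (Q - Qs)^2"
    unfolding KQ by (simp add: algebra_simps power2_eq_square)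
  also have "\<dots> \<ge> 0" using Dn by (simp add: mult_nonpos_nonneg)
  finally have "(\<sigma> - K * Q + 2 * D * Q^2) / (1+\<sigma>)^2 \<le> (\<sigma> - K * Qs + 2 * D * Qs^2) / (1+\<sigma>)^2"
    using sp by (simp add: divide_right_mono)
  then show "rec_value F R qH' q1' q2' \<le> rec_value F R qH q1 q2"
    using VF[OF a1] VF[OF a2] unfolding Qs_def by simp
qed

lemma main_aux:
  fixes F :: "real \<Rightarrow> real" and R \<sigma> \<beta> K E :: real
  assumes cdf: "type_cdf F"
    and sym: "\<forall>i. F (-i) = 1 - F i"
    and R: "0 < R" "R < 1"
    and beta: "\<beta> = F (1/2 - R)"
    and sigma: "\<sigma> > 0"
    and K_def: "K = 3*\<sigma> - \<beta> - \<sigma>^2 + \<sigma>^2*\<beta>"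
    and E_def: "E = 4*\<sigma> - 4*\<beta> - 4*\<sigma>^2 + 4*\<sigma>^2*\<beta>"
  shows "(K > 0 \<longrightarrow>
        (\<forall>Q Q' qH q1 q2 qH' q1' q2'. admissible \<sigma> Q qH q1 q2 \<and> admissible \<sigma> Q' qH' q1' q2' \<and> Q < Q'
           \<longrightarrow> rec_value F R qH' q1' q2' < rec_value F R qH q1 q2))
     \<and> (\<sigma> = 1 \<longrightarrow> K > 0)
     \<and> (K < 0 \<longrightarrow>
        (let Qs = K / E
         in 0 < Qs \<and> Qs < 1/2 \<and>
            (\<forall>qH q1 q2 Q qH' q1' q2'. admissible \<sigma> Qs qH q1 q2 \<and> admissible \<sigma> Q qH' q1' q2'
               \<longrightarrow> rec_value F R qH' q1' q2' \<le> rec_value F R qH q1 q2)))"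
proof -
  define D where "D = (1-\<sigma>)*(\<sigma> - \<beta>*(1+\<sigma>))"
  have ED: "E = 4*D" unfolding E_def D_def by (simp add: algebra_simps power2_eq_square)
  note p1 = part1_lemma[OF cdf sym R beta sigma K_def D_def]
  note p3 = part3_lemma[OF cdf sym R beta sigma K_def D_def]
  have A: "K > 0 \<longrightarrow>
        (\<forall>Q Q' qH q1 q2 qH' q1' q2'. admissible \<sigma> Q qH q1 q2 \<and> admissible \<sigma> Q' qH' q1' q2' \<and> Q < Q'
           \<longrightarrow> rec_value F R qH' q1' q2' < rec_value F R qH q1 q2)"
    using p1 by blast
  have B: "\<sigma> = 1 \<longrightarrow> K > 0" unfolding K_def by simp
  have C: "K < 0 \<longrightarrow>
        (let Qs = K / E
         in 0 < Qs \<and> Qs < 1/2 \<and>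
            (\<forall>qH q1 q2 Q qH' q1' q2'. admissible \<sigma> Qs qH q1 q2 \<and> admissible \<sigma> Q qH' q1' q2'
               \<longrightarrow> rec_value F R qH' q1' q2' \<le> rec_value F R qH q1 q2))"
    unfolding Let_def ED using p3 by blast
  show ?thesis using A B C by (intro conjI)
qed

theorem corollary3:
  fixes F :: "real \<Rightarrow> real" and R \<sigma> \<beta> :: real
  assumes cdf: "type_cdf F"
    and sym: "\<forall>i. F (-i) = 1 - F i"
    and R: "0 < R" "R < 1"
    and beta: "\<beta> = F (1/2 - R)"
    and sigma: "\<sigma> > 0"
  shows
    "(3*\<sigma> - \<beta> - \<sigma>^2 + \<sigma>^2*\<beta> > 0 \<longrightarrow>
        (\<forall>Q Q' qH q1 q2 qH' q1' q2'. admissible \<sigma> Q qH q1 q2 \<and> admissible \<sigma> Q' qH' q1' q2' \<and> Q < Q'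
           \<longrightarrow> rec_value F R qH' q1' q2' < rec_value F R qH q1 q2))
     \<and> (\<sigma> = 1 \<longrightarrow> 3*\<sigma> - \<beta> - \<sigma>^2 + \<sigma>^2*\<beta> > 0)
     \<and> (3*\<sigma> - \<beta> - \<sigma>^2 + \<sigma>^2*\<beta> < 0 \<longrightarrow>
        (let Qs = (3*\<sigma> - \<beta> - \<sigma>^2 + \<sigma>^2*\<beta>) / (4*\<sigma> - 4*\<beta> - 4*\<sigma>^2 + 4*\<sigma>^2*\<beta>)
         in 0 < Qs \<and> Qs < 1/2 \<and>
            (\<forall>qH q1 q2 Q qH' q1' q2'. admissible \<sigma> Qs qH q1 q2 \<and> admissible \<sigma> Q qH' q1' q2'
               \<longrightarrow> rec_value F R qH' q1' q2' \<le> rec_value F R qH q1 q2)))"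
    by (rule main_aux[OF cdf sym R beta sigma refl refl])

end
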